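(* Let $A\in\mathbb{R}^{m\times n}$ have no zero row, with rows $a_1^T,\dots,a_m^T$, let ${\bf u}=(\mu_1,\dots,\mu_m)\in\mathbb{R}^m$, $h_{k,l}=a_k^Ta_l/\|a_l\|_2^2$, and let $C({\bf u})\in\mathbb{R}^{m\times m}$ be the unit upper triangular matrix whose $(i,j)$ entry for $j>i$ is $$\sum_{v=2}^{j-i+1}(-1)^{v-1}\sum_{i=t_1<t_2<\dots<t_v=j}\ \prod_{s=1}^{v-1}\mu_{t_{s+1}}\prod_{s=1}^{v-1}h_{t_s,t_{s+1}}.$$ Let $\Lambda=\mathrm{diag}(\mu_1,\dots,\mu_m)$ and $M=\mathrm{diag}(1/\|a_1\|_2^2,\dots,1/\|a_m\|_2^2)$. Then there exists an upper triangular matrix $T_u({\bf u})\in\mathbb{R}^{m\times m}$ with diagonal entries $[T_u({\bf u})](i,i)=\mu_i\|a_i\|_2^2$ such that $\Lambda C({\bf u})=T_u({\bf u})M$.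
   Context: The inner sum runs over strictly increasing integer sequences from $i$ to $j$ of length $v$. *)

theory Defs
  imports "Jordan_Normal_Form.Matrix"
begin

(* Rows are indexed 0..m-1 (0-based) instead of 1..m. *)

definition rownorm2 :: "real mat \<Rightarrow> nat \<Rightarrow> real" where
  "rownorm2 A k = row A k \<bullet> row A k"

definition hcoef :: "real mat \<Rightarrow> nat \<Rightarrow> nat \<Rightarrow> real" where
  "hcoef A k l = (row A k \<bullet> row A l) / rownorm2 A l"

definition chains :: "nat \<Rightarrow> nat \<Rightarrow> nat \<Rightarrow> nat list set" where
  "chains i j v = {t. length t = v \<and> sorted_wrt (<) t \<and> t ! 0 = i \<and> t ! (v - 1) = j}"

definition Cmat :: "real mat \<Rightarrow> (nat \<Rightarrow> real) \<Rightarrow> real mat" where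
  "Cmat A u = mat (dim_row A) (dim_row A) (\<lambda>(i, j).
     if i = j then 1
     else if i < j then
       (\<Sum>v = 2..j - i + 1. (-1) ^ (v - 1) *
          (\<Sum>t \<in> chains i j v.
             (\<Prod>s = 1..v - 1. u (t ! s)) * (\<Prod>s = 1..v - 1. hcoef A (t ! (s - 1)) (t ! s))))
     else 0)"

definition diag_matrix :: "nat \<Rightarrow> (nat \<Rightarrow> real) \<Rightarrow> real mat" where
  "diag_matrix m d = mat m m (\<lambda>(i, j). if i = j then d i else 0)"

end

theory Submission
  imports Defs
begin

lemma self_sp_pos:
  fixes v :: "real vec"
  assumes "v \<in> carrier_vec n" "v \<noteq> 0\<^sub>v n"
  shows "v \<bullet> v \<noteq> 0"
proof
  assume h: "v \<bullet> v = 0"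
  have "(\<Sum>i\<in>{0..<n}. v $ i * v $ i) = 0" using h assms(1) by (simp add: scalar_prod_def)
  then have "\<forall>i\<in>{0..<n}. v $ i * v $ i = 0"
    by (subst sum_nonneg_eq_0_iff[symmetric]) auto
  then have "v = 0\<^sub>v n" using assms(1) by (intro eq_vecI) auto
  then show False using assms(2) by simp
qed

lemma diag_left:
  assumes "B \<in> carrier_mat m k" "i < m" "j < k"
  shows "(diag_matrix m d * B) $$ (i, j) = d i * B $$ (i, j)"
proof -
  have "(diag_matrix m d * B) $$ (i, j) = (\<Sum>l\<in>{0..<m}. (if i = l then d i else 0) * B $$ (l, j))"
    using assms by (simp add: diag_matrix_def scalar_prod_def)
  also have "\<dots> = (\<Sum>l\<in>{0..<m}. if l = i then d i * B $$ (l, j) else 0)"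
    by (rule sum.cong) auto
  also have "\<dots> = d i * B $$ (i, j)" using assms by simp
  finally show ?thesis .
qed

lemma diag_right:
  assumes "B \<in> carrier_mat k m" "i < k" "j < m"
  shows "(B * diag_matrix m d) $$ (i, j) = B $$ (i, j) * d j"
proof -
  have "(B * diag_matrix m d) $$ (i, j) = (\<Sum>l\<in>{0..<m}. B $$ (i, l) * (if l = j then d j else 0))"
    using assms by (auto simp: diag_matrix_def scalar_prod_def intro!: sum.cong)
  also have "\<dots> = (\<Sum>l\<in>{0..<m}. if l = j then B $$ (i, l) * d j else 0)"
    by (rule sum.cong) auto
  also have "\<dots> = B $$ (i, j) * d j" using assms by simp
  finally show ?thesis .
qed

theorem lemma3p10:
  fixes A :: "real mat" and u :: "nat \<Rightarrow> real" and m n :: nat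
  assumes "A \<in> carrier_mat m n"
    and "\<forall>k < m. row A k \<noteq> 0\<^sub>v n"
  shows "\<exists>T \<in> carrier_mat m m. upper_triangular T
           \<and> (\<forall>i < m. T $$ (i, i) = u i * rownorm2 A i)
           \<and> diag_matrix m u * Cmat A u = T * diag_matrix m (\<lambda>i. 1 / rownorm2 A i)"
proof -
  have nz: "rownorm2 A k \<noteq> 0" if "k < m" for k
    unfolding rownorm2_def using assms that by (intro self_sp_pos[of _ n]) auto
  have Cc: "Cmat A u \<in> carrier_mat m m" using assms by (simp add: Cmat_def)
  define T where "T = mat m m (\<lambda>(i, j). u i * Cmat A u $$ (i, j) * rownorm2 A j)"
  have Tc: "T \<in> carrier_mat m m" by (simp add: T_def)
  show ?thesis
  proof (intro bexI[of _ T] conjI allI impI)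
    show "upper_triangular T" unfolding upper_triangular_def T_def
      using assms by (auto simp: Cmat_def)
    show "T $$ (i, i) = u i * rownorm2 A i" if "i < m" for i
      using that assms by (simp add: T_def Cmat_def)
    show "diag_matrix m u * Cmat A u = T * diag_matrix m (\<lambda>i. 1 / rownorm2 A i)"
    proof (rule eq_matI)
      fix i j assume ij: "i < dim_row (T * diag_matrix m (\<lambda>i. 1 / rownorm2 A i))"
        "j < dim_col (T * diag_matrix m (\<lambda>i. 1 / rownorm2 A i))"
      then have i: "i < m" and j: "j < m" by (auto simp: T_def diag_matrix_def)
      show "(diag_matrix m u * Cmat A u) $$ (i, j) = (T * diag_matrix m (\<lambda>i. 1 / rownorm2 A i)) $$ (i, j)"
        using diag_left[OF Cc i j] diag_right[OF Tc i j] nz[OF j] i j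
        by (simp add: T_def)
    qed (auto simp: T_def diag_matrix_def Cmat_def carrier_matD(1)[OF assms(1)])
  qed (rule Tc)
qed

end
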